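(* Let $\Lambda>0$, $e>0$, $\phi_h>0$, and let $f:[0,\phi_h]\to(0,1]$ be strictly concave, strictly decreasing and differentiable with $f(0)=1$. Assume $2e/\Lambda\in f([0,\phi_h])$ and set $\underline{\phi}:=f^{-1}(2e/\Lambda)$, and let $\phi_{fp}:=\arg\max_{\phi\in[0,\phi_h]} f(\phi)\phi$. Define the limit matching revenue $$\tilde{\mathcal M}(\phi)=\begin{cases} e\phi & \text{if } \frac{e}{(\Lambda/2) f(\phi)}<1,\\ \frac{\Lambda}{2}f(\phi)\phi & \text{otherwise,}\end{cases}\qquad \phi\in[0,\phi_h].$$ Then $\tilde{\mathcal M}$ has a unique maximizer on $[0,\phi_h]$, given by $\phi^*=\max\{\phi_{fp},\underline{\phi}\}$. Moreover, for $\beta>0$ let $$\mathcal M(\phi;\beta)=\frac{\Lambda}{2}f(\phi)\phi\,\bigl(1-\mathcal D(\phi;\beta)\bigr),\qquad \mathcal D(\phi;\beta)=\Bigl(\sum_{n=0}^\infty \frac{e^n}{\prod_{a=1}^n\bigl(\frac{\Lambda}{2}f(\phi)+a\beta\bigr)}\Bigr)^{-1};$$ then for any sequence $\beta_n\downarrow 0$ and any choice of maximizers $\phi_n^*\in\arg\max_{\phi\in[0,\phi_h]}\mathcal M(\phi;\beta_n)$, there is a subsequence of $(\phi_n^* )$ converging to $\phi^*$.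
   Context: Model (monopoly): a single ride-hailing platform receives passengers as a Poisson process of rate $\Lambda/2$. Drivers arrive as a Poisson process of rate $\eta$ and wait in an FCFS queue. When a passenger arrives and at least one driver waits, the passenger is quoted the static price $\phi\in[0,\phi_h]$ and accepts with probability $f(\phi)$ (then immediately starting a ride with the head-of-line driver); otherwise the passenger is lost. Each waiting driver abandons independently after an exponential time of rate $\beta$; rides and post-abandonment breaks last exponential times of rate $\nu$, after which the driver rejoins the waiting queue with probability $p\in[0,1)$ and leaves otherwise. Here $e=\eta/(1-p)$. $\mathcal D(\phi;\beta)$ is the stationary probability that no driver is waiting and $\mathcal M(\phi;\beta)$ is the long-run rate of revenue (sum of accepted prices per unit time). $\tilde{\mathcal M}$ is the limit of $\mathcal M(\cdot;\beta)$ as $\beta\to 0$. *)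

theory Defs
  imports "HOL-Analysis.Analysis"
begin

definition strictly_concave_on :: "real set \<Rightarrow> (real \<Rightarrow> real) \<Rightarrow> bool" where
  "strictly_concave_on S f \<longleftrightarrow> convex S \<and>
     (\<forall>x\<in>S. \<forall>y\<in>S. \<forall>u::real. x \<noteq> y \<longrightarrow> 0 < u \<longrightarrow> u < 1 \<longrightarrow>
        f (u * x + (1 - u) * y) > u * f x + (1 - u) * f y)"

definition Mtilde :: "real \<Rightarrow> real \<Rightarrow> (real \<Rightarrow> real) \<Rightarrow> real \<Rightarrow> real" where
  "Mtilde Lam e f phi =
     (if e / ((Lam / 2) * f phi) < 1 then e * phi else (Lam / 2) * f phi * phi)"

text \<open>Stationary probability that no driver is waiting.\<close>
definition Dnodriver :: "real \<Rightarrow> real \<Rightarrow> (real \<Rightarrow> real) \<Rightarrow> real \<Rightarrow> real \<Rightarrow> real" where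
  "Dnodriver Lam e f phi beta =
     inverse (\<Sum>n. e ^ n / (\<Prod>a\<in>{1..n}. (Lam / 2) * f phi + real a * beta))"

definition Mrev :: "real \<Rightarrow> real \<Rightarrow> (real \<Rightarrow> real) \<Rightarrow> real \<Rightarrow> real \<Rightarrow> real" where
  "Mrev Lam e f phi beta = (Lam / 2) * f phi * phi * (1 - Dnodriver Lam e f phi beta)"

end

theory Submission imports Defs begin
lemma prod_pos_lb:
  fixes lam b :: real assumes "lam > 0" "b \<ge> 0"
  shows "0 < (\<Prod>a\<in>{1..n}. lam + real a * b)"
  using assms by (intro prod_pos) (auto intro: add_pos_nonneg)

lemma prod_ge_fact:
  fixes lam b :: real assumes "lam > 0" "b \<ge> 0"
  shows "fact n * b ^ n \<le> (\<Prod>a\<in>{1..n}. lam + real a * b)"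
proof -
  have "(\<Prod>a\<in>{1..n}. real a * b) = fact n * b ^ n"
    by (simp add: prod.distrib fact_prod)
  moreover have "(\<Prod>a\<in>{1..n}. real a * b) \<le> (\<Prod>a\<in>{1..n}. lam + real a * b)"
    using assms by (intro prod_mono) auto
  ultimately show ?thesis by simp
qed

lemma prod_ge_pow:
  fixes lam b :: real assumes "lam > 0" "b \<ge> 0"
  shows "lam ^ n \<le> (\<Prod>a\<in>{1..n}. lam + real a * b)"
proof -
  have "(\<Prod>a\<in>{1..n}. lam) \<le> (\<Prod>a\<in>{1..n}. lam + real a * b)"
    using assms by (intro prod_mono) auto
  then show ?thesis by simp
qed

lemma ser_summable:
  fixes lam b e :: real assumes "lam > 0" "b > 0" "e > 0"
  shows "summable (\<lambda>n. e ^ n / (\<Prod>a\<in>{1..n}. lam + real a * b))"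
proof (rule summable_comparison_test'[OF summable_exp[of "e / b"]])
  fix n :: nat
  have p: "0 < (\<Prod>a\<in>{1..n}. lam + real a * b)" using prod_pos_lb assms by simp
  have q: "fact n * b ^ n \<le> (\<Prod>a\<in>{1..n}. lam + real a * b)" using prod_ge_fact assms by simp
  have "e ^ n / (\<Prod>a\<in>{1..n}. lam + real a * b) \<le> e ^ n / (fact n * b ^ n)"
    using assms q p by (intro divide_left_mono) (auto intro!: mult_pos_pos)
  also have "\<dots> = inverse (fact n) * (e / b) ^ n" by (simp add: field_simps power_divide)
  finally show "norm (e ^ n / (\<Prod>a\<in>{1..n}. lam + real a * b)) \<le> inverse (fact n) * (e / b) ^ n"
    using p assms by simp
qed

lemma ser_ge1:
  fixes lam b e :: real assumes "lam > 0" "b > 0" "e > 0"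
  shows "1 \<le> (\<Sum>n. e ^ n / (\<Prod>a\<in>{1..n}. lam + real a * b))"
proof -
  have "(\<Sum>n\<in>{0}. e ^ n / (\<Prod>a\<in>{1..n}. lam + real a * b)) \<le> (\<Sum>n. e ^ n / (\<Prod>a\<in>{1..n}. lam + real a * b))"
    using assms prod_pos_lb[of lam b] by (intro sum_le_suminf ser_summable) (auto intro!: divide_nonneg_pos)
  then show ?thesis by simp
qed

lemma ser_le_geom:
  fixes lam b e :: real assumes "lam > e" "b > 0" "e > 0"
  shows "(\<Sum>n. e ^ n / (\<Prod>a\<in>{1..n}. lam + real a * b)) \<le> 1 / (1 - e / lam)"
proof -
  have l: "lam > 0" using assms by simp
  have g: "(\<lambda>n. (e / lam) ^ n) sums (1 / (1 - e / lam))"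
    using geometric_sums[of "e / lam"] assms l by simp
  have "(\<Sum>n. e ^ n / (\<Prod>a\<in>{1..n}. lam + real a * b)) \<le> (\<Sum>n. (e / lam) ^ n)"
  proof (rule suminf_le)
    fix n
    have "e ^ n / (\<Prod>a\<in>{1..n}. lam + real a * b) \<le> e ^ n / lam ^ n"
      using assms l prod_ge_pow[of lam b n] prod_pos_lb[of lam b n] by (intro divide_left_mono) (auto intro!: mult_pos_pos)
    then show "e ^ n / (\<Prod>a\<in>{1..n}. lam + real a * b) \<le> (e / lam) ^ n" by (simp add: power_divide)
  qed (use ser_summable[OF l assms(2,3)] g sums_summable in blast)+
  then show ?thesis using g sums_unique by metis
qed

lemma Mrev_le_Mtilde:
  assumes "Lam > 0" "e > 0" "phi \<ge> 0" "f phi > 0" "b > 0"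
  shows "Mrev Lam e f phi b \<le> Mtilde Lam e f phi"
proof -
  define lam where "lam = Lam / 2 * f phi"
  have l: "lam > 0" using assms by (simp add: lam_def)
  define S where "S = (\<Sum>n. e ^ n / (\<Prod>a\<in>{1..n}. lam + real a * b))"
  have S1: "S \<ge> 1" unfolding S_def using ser_ge1 l assms by simp
  have D: "Dnodriver Lam e f phi b = inverse S" unfolding Dnodriver_def S_def lam_def by simp
  have M: "Mrev Lam e f phi b = lam * phi * (1 - inverse S)" unfolding Mrev_def D lam_def by simp
  show ?thesis
  proof (cases "e < lam")
    case True
    have "S \<le> 1 / (1 - e / lam)" unfolding S_def using ser_le_geom True assms by simp
    then have "inverse S \<ge> 1 - e / lam" using S1 True l
      by (smt (verit, ccfv_SIG) divide_pos_pos le_imp_inverse_le inverse_eq_divide inverse_inverse_eq)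
    then have "1 - inverse S \<le> e / lam" by simp
    then have "lam * phi * (1 - inverse S) \<le> lam * phi * (e / lam)"
      using l assms by (intro mult_left_mono) auto
    also have "\<dots> = e * phi" using l by simp
    finally show ?thesis using True l unfolding M Mtilde_def lam_def[symmetric] by simp
  next
    case False
    have "inverse S > 0" using S1 by simp
    then have "lam * phi * (1 - inverse S) \<le> lam * phi * 1"
      using l assms by (intro mult_left_mono) auto
    then show ?thesis using False l unfolding M Mtilde_def lam_def[symmetric] by simp
  qed
qed

lemma D_to_0:
  fixes lam e :: real and b :: "nat \<Rightarrow> real"
  assumes "lam > 0" "lam \<le> e" "\<And>k. b k > 0" "b \<longlonglongrightarrow> 0"
  shows "(\<lambda>k. inverse (\<Sum>n. e ^ n / (\<Prod>a\<in>{1..n}. lam + real a * b k))) \<longlonglongrightarrow> 0"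
proof (rule tendsto_inverse_0_at_top, subst filterlim_at_top, intro allI)
  fix Z :: real
  define N where "N = nat (ceiling Z) + 2"
  have ZN: "Z + 1 < real N" unfolding N_def by linarith
  define Q where "Q = (\<lambda>x. \<Sum>n<N. e ^ n / (\<Prod>a\<in>{1..n}. lam + real a * x))"
  have "(\<lambda>k. Q (b k)) \<longlonglongrightarrow> Q 0"
    unfolding Q_def using assms(1)
    by (intro tendsto_intros assms(4)) (auto simp: prod_pos_lb)
  moreover have "Q 0 \<ge> real N"
  proof -
    have "(\<Sum>n<N. (1::real)) \<le> Q 0" unfolding Q_def
    proof (intro sum_mono)
      fix n
      have "1 \<le> (e / lam) ^ n" using assms by (intro one_le_power) simp
      then show "1 \<le> e ^ n / (\<Prod>a\<in>{1..n}. lam + real a * 0)" by (simp add: power_divide)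
    qed
    then show ?thesis by simp
  qed
  ultimately have "eventually (\<lambda>k. Q (b k) > Q 0 - 1) sequentially"
    by (intro order_tendstoD) auto
  then show "eventually (\<lambda>k. Z \<le> (\<Sum>n. e ^ n / (\<Prod>a\<in>{1..n}. lam + real a * b k))) sequentially"
  proof (rule eventually_mono)
    fix k assume h: "Q (b k) > Q 0 - 1"
    have "Q (b k) \<le> (\<Sum>n. e ^ n / (\<Prod>a\<in>{1..n}. lam + real a * b k))"
      unfolding Q_def using assms prod_pos_lb[of lam "b k"] less_imp_le[OF assms(3)[of k]]
      by (intro sum_le_suminf ser_summable) (auto intro!: divide_nonneg_pos)
    then show "Z \<le> (\<Sum>n. e ^ n / (\<Prod>a\<in>{1..n}. lam + real a * b k))"
      using h ZN \<open>Q 0 \<ge> real N\<close> by linarith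
  qed
qed

theorem theorem1:
  fixes Lam e phi_h :: real and f :: "real \<Rightarrow> real" and phi_fp phi_low :: real
  assumes Lam_pos: "Lam > 0" and e_pos: "e > 0" and phi_h_pos: "phi_h > 0"
    and f_range: "\<forall>x\<in>{0..phi_h}. 0 < f x \<and> f x \<le> 1"
    and f_conc: "strictly_concave_on {0..phi_h} f"
    and f_decr: "strict_antimono_on {0..phi_h} f"
    and f_diff: "f differentiable_on {0..phi_h}"
    and f0: "f 0 = 1"
    and in_range: "2 * e / Lam \<in> f ` {0..phi_h}"
    and phi_low: "phi_low \<in> {0..phi_h}" "f phi_low = 2 * e / Lam"
    and phi_fp: "phi_fp \<in> {0..phi_h}" "\<forall>phi\<in>{0..phi_h}. f phi * phi \<le> f phi_fp * phi_fp"
  shows "(\<exists>!psi. psi \<in> {0..phi_h} \<and> (\<forall>phi\<in>{0..phi_h}. Mtilde Lam e f phi \<le> Mtilde Lam e f psi))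
       \<and> max phi_fp phi_low \<in> {0..phi_h}
       \<and> (\<forall>phi\<in>{0..phi_h}. Mtilde Lam e f phi \<le> Mtilde Lam e f (max phi_fp phi_low))
       \<and> (\<forall>(beta :: nat \<Rightarrow> real) (ps :: nat \<Rightarrow> real).
            (\<forall>n. beta n > 0) \<and> decseq beta \<and> beta \<longlonglongrightarrow> 0 \<and>
            (\<forall>n. ps n \<in> {0..phi_h} \<and>
                 (\<forall>phi\<in>{0..phi_h}. Mrev Lam e f phi (beta n) \<le> Mrev Lam e f (ps n) (beta n)))
            \<longrightarrow> (\<exists>r. strict_mono r \<and> (ps \<circ> r) \<longlonglongrightarrow> max phi_fp phi_low))"
proof -
  define I where "I = {0..phi_h}"
  define c where "c = Lam / 2"
  define L where "L = phi_low"
  define F where "F = phi_fp"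
  define P where "P = max F L"
  define Mt where "Mt = Mtilde Lam e f"
  define h where "h = (\<lambda>x. f x * x)"
  have c_pos: "c > 0" using Lam_pos by (simp add: c_def)
  have LI: "L \<in> I" and FI: "F \<in> I" using phi_low phi_fp by (auto simp: I_def L_def F_def)
  have PI: "P \<in> I" using LI FI by (auto simp: I_def P_def)
  have fpos: "\<And>x. x \<in> I \<Longrightarrow> f x > 0" using f_range by (auto simp: I_def)
  have dec: "\<And>x y. x \<in> I \<Longrightarrow> y \<in> I \<Longrightarrow> x < y \<Longrightarrow> f y < f x"
    using f_decr unfolding monotone_on_def I_def by blast
  have decle: "\<And>x y. x \<in> I \<Longrightarrow> y \<in> I \<Longrightarrow> x \<le> y \<Longrightarrow> f y \<le> f x"
    using dec by (metis order_le_less order_refl less_imp_le)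
  have fL: "c * f L = e" using phi_low Lam_pos by (simp add: c_def L_def)
  have Mt_lo: "Mt x = e * x" if "x \<in> I" "x < L" for x
  proof -
    have "f x > f L" using dec that LI by blast
    then have "c * f x > e" using fL c_pos by (metis mult_strict_left_mono)
    then have "e / (c * f x) < 1" using e_pos by simp
    then show ?thesis by (simp add: Mt_def Mtilde_def c_def)
  qed
  have Mt_hi: "Mt x = c * f x * x" if "x \<in> I" "L \<le> x" for x
  proof -
    have "f x \<le> f L" using decle that LI by blast
    then have "c * f x \<le> e" using fL c_pos by (metis mult_left_mono less_imp_le)
    then have "\<not> e / (c * f x) < 1" using c_pos fpos[OF that(1)] by (simp add: divide_less_eq)
    then show ?thesis by (simp add: Mt_def Mtilde_def c_def)
  qed
  have Mt_le_e: "Mt x \<le> e * x" if "x \<in> I" for x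
  proof (cases "x < L")
    case False
    have "f x \<le> f L" using decle that LI False by simp
    then have "c * f x \<le> e" using fL c_pos by (metis mult_left_mono less_imp_le)
    moreover have "x \<ge> 0" using that by (simp add: I_def)
    ultimately show ?thesis using Mt_hi that False by (simp add: mult_right_mono)
  qed (use Mt_lo that in simp)
  have Mt_le_h: "Mt x \<le> c * h x" if "x \<in> I" for x
  proof (cases "x < L")
    case True
    have "f x > f L" using dec that LI True by blast
    then have "c * f x \<ge> e" using fL c_pos by (metis mult_left_mono less_imp_le)
    moreover have "x \<ge> 0" using that by (simp add: I_def)
    ultimately have "e * x \<le> (c * f x) * x" by (simp add: mult_right_mono)
    then show ?thesis using Mt_lo that True by (simp add: h_def mult.assoc)
  qed (use Mt_hi that in \<open>simp add: h_def mult.assoc\<close>)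
  have hconc: "h (u * x + (1 - u) * y) > u * h x + (1 - u) * h y"
    if "x \<in> I" "y \<in> I" "x \<noteq> y" "0 < u" "u < 1" for x y u
  proof -
    define z where "z = u * x + (1 - u) * y"
    have x0: "x \<ge> 0" and y0: "y \<ge> 0" using that by (auto simp: I_def)
    have fz: "f z > u * f x + (1 - u) * f y"
      using f_conc that unfolding strictly_concave_on_def I_def z_def by blast
    have z0: "z > 0"
    proof -
      have "u * x \<ge> 0" "(1 - u) * y \<ge> 0" using x0 y0 that by auto
      moreover have "u * x > 0 \<or> (1 - u) * y > 0"
        using that x0 y0 by (cases "x = 0") auto
      ultimately show ?thesis unfolding z_def by linarith
    qed
    have cross: "(x - y) * (f x - f y) \<le> 0"
    proof (cases "x < y")
      case True then show ?thesis using dec[OF that(1,2)] by (simp add: mult_nonpos_nonneg)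
    next
      case False then have "y < x" using that by simp
      then show ?thesis using dec[OF that(2,1)] by (simp add: mult_nonneg_nonpos)
    qed
    have "z * f z > z * (u * f x + (1 - u) * f y)" using fz z0 by simp
    moreover have "z * (u * f x + (1 - u) * f y) - (u * (f x * x) + (1 - u) * (f y * y))
        = - (u * (1 - u)) * ((x - y) * (f x - f y))"
      unfolding z_def by (simp add: algebra_simps)
    moreover have "- (u * (1 - u)) * ((x - y) * (f x - f y)) \<ge> 0"
    proof -
      have "u * (1 - u) \<ge> 0" using that by simp
      then have "u * (1 - u) * ((x - y) * (f x - f y)) \<le> 0" using cross by (rule mult_nonneg_nonpos)
      then show ?thesis by simp
    qed
    ultimately show ?thesis unfolding h_def z_def[symmetric] by (simp add: mult.commute)
  qed
  have MtP: "Mt P = c * h P" using Mt_hi PI by (simp add: P_def h_def mult.assoc)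
  have hF: "\<And>x. x \<in> I \<Longrightarrow> h x \<le> h F" using phi_fp by (simp add: h_def F_def I_def)
  have hF_strict: "h x < h F" if "x \<in> I" "x \<noteq> F" for x
  proof -
    have "h ((1/2) * x + (1 - 1/2) * F) > (1/2) * h x + (1 - 1/2) * h F"
      by (rule hconc[OF that(1) FI that(2)]) auto
    moreover have "(1/2) * x + (1 - 1/2) * F \<in> I" using that FI by (auto simp: I_def)
    ultimately show ?thesis using hF by fastforce
  qed
  have hL_strict: "h x < h L" if "x \<in> I" "L < x" "F < L" for x
  proof -
    define u where "u = (x - L) / (x - F)"
    have u0: "0 < u" "u < 1" using that by (auto simp: u_def divide_less_eq)
    have xF: "x - F \<noteq> 0" using that by simp
    have "u * F + (1 - u) * x = L"
    proof -
      have "u * (x - F) = x - L" unfolding u_def using xF by simp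
      then show ?thesis by (simp add: algebra_simps)
    qed
    then have "h L > u * h F + (1 - u) * h x"
      using hconc[OF FI that(1) _ u0] that by force
    moreover have "u * h F \<ge> u * h x" using hF[OF that(1)] u0 by simp
    ultimately show ?thesis by (simp add: algebra_simps)
  qed
  have Pmax: "Mt x \<le> Mt P" if "x \<in> I" for x
  proof (cases "L \<le> F")
    case True
    then have "P = F" by (simp add: P_def)
    then show ?thesis using Mt_le_h[OF that] hF[OF that] MtP c_pos by (metis mult_left_mono less_imp_le order_trans)
  next
    case False
    then have PL: "P = L" by (simp add: P_def)
    have MtL: "Mt L = e * L" using MtP fL PL by (simp add: h_def)
    show ?thesis
    proof (cases "x \<le> L")
      case True
      then show ?thesis using Mt_le_e[OF that] MtL PL e_pos by (metis mult_left_mono less_imp_le order_trans)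
    next
      case False
      then show ?thesis using Mt_le_h[OF that] hL_strict[OF that] \<open>\<not> L \<le> F\<close> PL MtP c_pos
        by (smt (verit) mult_strict_left_mono)
    qed
  qed
  have Puniq: "psi = P" if "psi \<in> I" "\<forall>x\<in>I. Mt x \<le> Mt psi" for psi
  proof -
    have eq: "Mt psi = Mt P" using that Pmax PI by (simp add: order_antisym)
    have "Mt L \<le> Mt P" using Pmax LI by simp
    moreover have "Mt L = e * L" using Mt_hi LI fL by simp
    ultimately have psiL: "L \<le> psi"
      using Mt_lo[OF that(1)] eq e_pos by (smt (verit) mult_strict_left_mono)
    have Mpsi: "Mt psi = c * h psi" using Mt_hi[OF that(1) psiL] by (simp add: h_def mult.assoc)
    show ?thesis
    proof (cases "L \<le> F")
      case True
      then have "P = F" by (simp add: P_def)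
      then show ?thesis using hF_strict[OF that(1)] eq Mpsi MtP c_pos by force
    next
      case False
      then have PL: "P = L" by (simp add: P_def)
      show ?thesis
      proof (rule ccontr)
        assume "psi \<noteq> P"
        then have "L < psi" using psiL PL by simp
        then show False using hL_strict[OF that(1)] False eq Mpsi MtP PL c_pos by force
      qed
    qed
  qed
  have fcont: "continuous_on I f" using f_diff differentiable_imp_continuous_on by (simp add: I_def)
  have Mt_cont: "continuous_on I Mt"
  proof -
    have "continuous_on I (\<lambda>x. x * min e (c * f x))"
      by (intro continuous_intros fcont)
    moreover have "Mt x = x * min e (c * f x)" if "x \<in> I" for x
    proof (cases "x < L")
      case True
      have "f x > f L" using dec that LI True by blast
      then have "c * f x \<ge> e" using fL c_pos by (metis mult_left_mono less_imp_le)
      then show ?thesis using Mt_lo[OF that True] by (simp add: min_def mult.commute)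
    next
      case False
      have "f x \<le> f L" using decle that LI False by simp
      then have "c * f x \<le> e" using fL c_pos by (metis mult_left_mono less_imp_le)
      then show ?thesis using Mt_hi[OF that] False by (simp add: min_def mult.commute)
    qed
    ultimately show ?thesis using continuous_on_cong by (metis (no_types, lifting))
  qed
  have part4: "\<exists>r. strict_mono r \<and> (ps \<circ> r) \<longlonglongrightarrow> P"
    if bpos: "\<forall>n. beta n > 0" and b0: "beta \<longlonglongrightarrow> 0"
      and psI: "\<forall>n. ps n \<in> I" and psmax: "\<forall>n. \<forall>x\<in>I. Mrev Lam e f x (beta n) \<le> Mrev Lam e f (ps n) (beta n)"
    for beta :: "nat \<Rightarrow> real" and ps
  proof -
    obtain q r where qI: "q \<in> I" and r: "strict_mono r" and lim: "(ps \<circ> r) \<longlonglongrightarrow> q"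
      using seq_compactE[OF compact_imp_seq_compact[OF compact_Icc] psI[unfolded I_def]]
      unfolding I_def by metis
    have lamP: "Lam / 2 * f P \<le> e"
    proof -
      have "f P \<le> f L" using decle PI LI by (simp add: P_def)
      then show ?thesis using fL c_pos unfolding c_def by (metis mult_left_mono less_imp_le)
    qed
    have lamP0: "Lam / 2 * f P > 0" using fpos[OF PI] Lam_pos by simp
    have "(\<lambda>k. Dnodriver Lam e f P (beta k)) \<longlonglongrightarrow> 0"
      unfolding Dnodriver_def using D_to_0[OF lamP0 lamP _ b0] bpos by blast
    then have "(\<lambda>k. Mrev Lam e f P (beta k)) \<longlonglongrightarrow> Lam / 2 * f P * P * (1 - 0)"
      unfolding Mrev_def by (intro tendsto_intros)
    moreover have "Lam / 2 * f P * P * (1 - 0) = Mt P" using MtP by (simp add: c_def h_def)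
    ultimately have l1: "(\<lambda>k. Mrev Lam e f P (beta k)) \<longlonglongrightarrow> Mt P" by simp
    have l1': "(\<lambda>k. Mrev Lam e f P (beta (r k))) \<longlonglongrightarrow> Mt P"
      using LIMSEQ_subseq_LIMSEQ[OF l1 r] by (simp add: comp_def)
    have l2: "(\<lambda>k. Mt (ps (r k))) \<longlonglongrightarrow> Mt q"
      using continuous_on_tendsto_compose[OF Mt_cont lim qI] psI by (simp add: comp_def)
    have le: "Mrev Lam e f P (beta (r k)) \<le> Mt (ps (r k))" for k
    proof -
      have "Mrev Lam e f P (beta (r k)) \<le> Mrev Lam e f (ps (r k)) (beta (r k))"
        using psmax PI by blast
      also have "\<dots> \<le> Mt (ps (r k))" unfolding Mt_def
        using psI fpos bpos Lam_pos e_pos by (intro Mrev_le_Mtilde) (auto simp: I_def)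
      finally show ?thesis .
    qed
    have "Mt P \<le> Mt q" using LIMSEQ_le[OF l1' l2] le by blast
    then have "\<forall>x\<in>I. Mt x \<le> Mt q" using Pmax by (meson order_trans)
    then have "q = P" using Puniq qI by blast
    then show ?thesis using r lim by blast
  qed
  show ?thesis
    unfolding I_def[symmetric] Mt_def[symmetric] L_def[symmetric] F_def[symmetric] P_def[symmetric]
  proof (intro conjI allI impI)
    show "\<exists>!psi. psi \<in> I \<and> (\<forall>x\<in>I. Mt x \<le> Mt psi)"
      using PI Pmax Puniq by blast
    show "P \<in> I" by (rule PI)
    show "\<forall>x\<in>I. Mt x \<le> Mt P" using Pmax by blast
  next
    fix beta :: "nat \<Rightarrow> real" and ps
    assume "(\<forall>n. 0 < beta n) \<and> decseq beta \<and> beta \<longlonglongrightarrow> 0 \<and>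
       (\<forall>n. ps n \<in> I \<and> (\<forall>x\<in>I. Mrev Lam e f x (beta n) \<le> Mrev Lam e f (ps n) (beta n)))"
    then show "\<exists>r. strict_mono r \<and> (ps \<circ> r) \<longlonglongrightarrow> P" using part4 by blast
  qed
qed

end
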